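(* Let $\alpha\in(0,1)$. For all density operators $\varrho,\sigma$ on a finite-dimensional Hilbert space, $\overline{D}_\alpha^{\mathrm{test}}(\varrho\|\sigma)\ge0$, with equality if and only if $\varrho=\sigma$.
   Context: For probability vectors $p,q$ and $\alpha\in(0,1)$, $D_\alpha(p\|q)=\frac{1}{\alpha-1}\log\sum_xp(x)^\alpha q(x)^{1-\alpha}$. A test is an operator $0\le T\le I$; $\mathcal T(X):=(\operatorname{Tr}XT,\operatorname{Tr}X(I-T))$; $D_\alpha^{\mathrm{test}}(\varrho\|\sigma):=\max_{0\le T\le I}D_\alpha(\mathcal T(\varrho)\|\mathcal T(\sigma))$; $\overline{D}_\alpha^{\mathrm{test}}(\varrho\|\sigma):=\limsup_n\frac1nD_\alpha^{\mathrm{test}}(\varrho^{\otimes n}\|\sigma^{\otimes n})$. *)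

theory Defs
  imports "HOL-Analysis.Analysis" "Jordan_Normal_Form.Matrix" "HOL-Library.Extended_Real"
begin

text \<open>Finite-dimensional Hilbert space = C^d; operators are d x d complex matrices.\<close>

definition mtrace :: "complex mat \<Rightarrow> complex" where
  "mtrace A = (\<Sum>i<dim_row A. A $$ (i, i))"

definition hermitian_mat :: "nat \<Rightarrow> complex mat \<Rightarrow> bool" where
  "hermitian_mat d A \<longleftrightarrow> A \<in> carrier_mat d d \<and>
     (\<forall>i<d. \<forall>j<d. A $$ (i, j) = cnj (A $$ (j, i)))"

definition psd_mat :: "nat \<Rightarrow> complex mat \<Rightarrow> bool" where
  "psd_mat d A \<longleftrightarrow> hermitian_mat d A \<and>
     (\<forall>v \<in> carrier_vec d. 0 \<le> Re ((A *\<^sub>v v) \<bullet>c v))"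

definition density_op :: "nat \<Rightarrow> complex mat \<Rightarrow> bool" where
  "density_op d \<rho> \<longleftrightarrow> psd_mat d \<rho> \<and> mtrace \<rho> = 1"

definition test_op :: "nat \<Rightarrow> complex mat \<Rightarrow> bool" where
  "test_op d T \<longleftrightarrow> psd_mat d T \<and> psd_mat d (1\<^sub>m d - T)"

definition kron :: "complex mat \<Rightarrow> complex mat \<Rightarrow> complex mat" where
  "kron A B = mat (dim_row A * dim_row B) (dim_col A * dim_col B)
     (\<lambda>(i, j). A $$ (i div dim_row B, j div dim_col B) * B $$ (i mod dim_row B, j mod dim_col B))"

fun tensor_pow :: "complex mat \<Rightarrow> nat \<Rightarrow> complex mat" where
  "tensor_pow A 0 = 1\<^sub>m 1"
| "tensor_pow A (Suc n) = kron (tensor_pow A n) A"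

text \<open>Classical Renyi divergence of two-point distributions (p1,p2), (q1,q2), alpha in (0,1);
  equals +infinity when the sum vanishes (disjoint supports), following log 0 = -infinity.\<close>
definition renyi2 :: "real \<Rightarrow> real \<times> real \<Rightarrow> real \<times> real \<Rightarrow> ereal" where
  "renyi2 \<alpha> p q =
     (let s = fst p powr \<alpha> * fst q powr (1 - \<alpha>) + snd p powr \<alpha> * snd q powr (1 - \<alpha>)
      in if s = 0 then \<infinity> else ereal (ln s / (\<alpha> - 1)))"

definition test_channel :: "complex mat \<Rightarrow> complex mat \<Rightarrow> real \<times> real" where
  "test_channel T X = (Re (mtrace (X * T)), Re (mtrace (X * (1\<^sub>m (dim_row X) - T))))"

definition D_test :: "real \<Rightarrow> nat \<Rightarrow> complex mat \<Rightarrow> complex mat \<Rightarrow> ereal" where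
  "D_test \<alpha> d \<rho> \<sigma> = (SUP T \<in> {T. test_op d T}. renyi2 \<alpha> (test_channel T \<rho>) (test_channel T \<sigma>))"

definition D_test_reg :: "real \<Rightarrow> nat \<Rightarrow> complex mat \<Rightarrow> complex mat \<Rightarrow> ereal" where
  "D_test_reg \<alpha> d \<rho> \<sigma> =
     limsup (\<lambda>n. D_test \<alpha> (d ^ n) (tensor_pow \<rho> n) (tensor_pow \<sigma> n) / ereal (real n))"

end

theory Submission
  imports Defs
begin

lemma sum_div_mod:
  assumes "0 < (d::nat)"
  shows "(\<Sum>k<N*d. h (k div d) (k mod d)) = (\<Sum>i<N. \<Sum>j<d. h i j)"
proof (induction N)
  case 0 then show ?case by simp
next
  case (Suc N)
  have "{..<Suc N * d} = {..<N*d} \<union> {N*d..<N*d+d}" by auto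
  then have "(\<Sum>k<Suc N*d. h (k div d) (k mod d)) = (\<Sum>k<N*d. h (k div d) (k mod d)) + (\<Sum>k\<in>{N*d..<N*d+d}. h (k div d) (k mod d))"
    by (simp add: sum.union_disjoint ivl_disj_int)
  also have "(\<Sum>k\<in>{N*d..<N*d+d}. h (k div d) (k mod d)) = (\<Sum>j<d. h N j)"
  proof -
    have "(\<Sum>k\<in>{N*d..<N*d+d}. h (k div d) (k mod d)) = (\<Sum>j\<in>{0..<d}. h ((N*d + j) div d) ((N*d + j) mod d))"
      using sum.atLeastLessThan_shift_0[of "\<lambda>k. h (k div d) (k mod d)" "N*d" "N*d+d"] by (simp add: comp_def)
    then show ?thesis using assms by (simp add: atLeast0LessThan)
  qed
  finally show ?case using Suc by simp
qed

lemma sum_div_mod_pow: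
  assumes "0 < (d::nat)"
  shows "(\<Sum>k<d^Suc n. h (k div d) (k mod d)) = (\<Sum>i<d^n. \<Sum>j<d. h i j)"
  using sum_div_mod[OF assms, where N="d^n" and h=h] by (simp add: mult.commute)

lemma sum_div_mod_pow2:
  assumes "0 < (d::nat)"
  shows "(\<Sum>i<d^Suc n. \<Sum>j<d^Suc n. F (i div d) (i mod d) (j div d) (j mod d))
     = (\<Sum>i1<d^n. \<Sum>i2<d. \<Sum>j1<d^n. \<Sum>j2<d. F i1 i2 j1 j2)"
proof -
  have "(\<Sum>i<d^Suc n. \<Sum>j<d^Suc n. F (i div d) (i mod d) (j div d) (j mod d))
     = (\<Sum>i<d^Suc n. \<Sum>j1<d^n. \<Sum>j2<d. F (i div d) (i mod d) j1 j2)"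
  proof -
    have "(\<Sum>j<d^Suc n. F (i div d) (i mod d) (j div d) (j mod d)) = (\<Sum>j1<d^n. \<Sum>j2<d. F (i div d) (i mod d) j1 j2)" for i
      by (rule sum_div_mod_pow[OF assms, where h="\<lambda>j1 j2. F (i div d) (i mod d) j1 j2"])
    then show ?thesis by simp
  qed
  also have "\<dots> = (\<Sum>i1<d^n. \<Sum>i2<d. \<Sum>j1<d^n. \<Sum>j2<d. F i1 i2 j1 j2)"
    by (rule sum_div_mod_pow[OF assms, where h="\<lambda>i1 i2. \<Sum>j1<d^n. \<Sum>j2<d. F i1 i2 j1 j2"])
  finally show ?thesis .
qed

lemma le_powr_one: "x \<le> (x::real) powr 1"
proof (cases "x > 0")
  case False
  then show ?thesis by (auto simp: powr_def intro: order_trans[of _ 0] less_imp_le)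
qed simp

definition qf :: "nat \<Rightarrow> complex mat \<Rightarrow> (nat \<Rightarrow> complex) \<Rightarrow> complex" where
  "qf N A v = (\<Sum>i<N. \<Sum>j<N. cnj (v i) * A $$ (i,j) * v j)"

lemma cscalar_qf:
  assumes "A \<in> carrier_mat N N" "v \<in> carrier_vec N"
  shows "(A *\<^sub>v v) \<bullet>c v = qf N A (\<lambda>i. v $ i)"
  using assms unfolding qf_def
  by (auto simp: scalar_prod_def atLeast0LessThan sum_distrib_right sum_distrib_left mult_ac intro!: sum.cong)

lemma qf_cong: "(\<And>i. i < N \<Longrightarrow> v i = w i) \<Longrightarrow> qf N A v = qf N A w"
  unfolding qf_def by (auto intro!: sum.cong)

lemma psd_qf: "psd_mat N A \<Longrightarrow> 0 \<le> Re (qf N A v)"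
proof -
  assume a: "psd_mat N A"
  then have "0 \<le> Re ((A *\<^sub>v vec N v) \<bullet>c vec N v)" unfolding psd_mat_def by auto
  also have "(A *\<^sub>v vec N v) \<bullet>c vec N v = qf N A v"
    using a by (subst cscalar_qf[of _ N]) (auto simp: psd_mat_def hermitian_mat_def intro!: qf_cong)
  finally show ?thesis .
qed

lemma psd_qfI:
  assumes h: "hermitian_mat N A" and q: "\<And>v. 0 \<le> Re (qf N A v)"
  shows "psd_mat N A"
  unfolding psd_mat_def
proof (intro conjI ballI)
  have A: "A \<in> carrier_mat N N" using h unfolding hermitian_mat_def by simp
  fix v :: "complex vec" assume v: "v \<in> carrier_vec N"
  show "0 \<le> Re ((A *\<^sub>v v) \<bullet>c v)" using cscalar_qf[OF A v] q by simp
qed (rule h)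

lemma herm_qf_real:
  assumes "hermitian_mat N A"
  shows "qf N A v = of_real (Re (qf N A v))"
proof -
  have "cnj (qf N A v) = (\<Sum>i<N. \<Sum>j<N. v i * cnj (A $$ (i,j)) * cnj (v j))"
    unfolding qf_def by simp
  also have "\<dots> = (\<Sum>i<N. \<Sum>j<N. v i * A $$ (j,i) * cnj (v j))"
  proof -
    have h: "\<And>i j. i<N \<Longrightarrow> j<N \<Longrightarrow> cnj (A$$(i,j)) = A$$(j,i)"
      using assms unfolding hermitian_mat_def by (metis complex_cnj_cnj)
    show ?thesis by (simp add: h)
  qed
  also have "\<dots> = qf N A v"
    unfolding qf_def by (subst sum.swap) (auto simp: mult_ac intro!: sum.cong)
  finally have "cnj (qf N A v) = qf N A v" .
  then have "Im (qf N A v) = 0" by (metis cnj.sel(2) neg_equal_zero)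
  then show ?thesis by (simp add: complex_eq_iff)
qed

definition frame :: "nat \<Rightarrow> (nat \<Rightarrow> nat \<Rightarrow> complex) \<Rightarrow> bool" where
  "frame N u \<longleftrightarrow> (\<forall>i<N. \<forall>j<N. (\<Sum>l<N. u l i * cnj (u l j)) = (if i = j then 1 else 0))"

fun wv :: "nat \<Rightarrow> (nat \<Rightarrow> nat \<Rightarrow> complex) \<Rightarrow> nat \<Rightarrow> nat \<Rightarrow> nat \<Rightarrow> complex" where
  "wv d u 0 k i = 1"
| "wv d u (Suc n) k i = wv d u n (k div d) (i div d) * u (k mod d) (i mod d)"

lemma frame_wv:
  assumes d: "0 < d" and u: "frame d u"
  shows "frame (d^n) (wv d u n)"
proof (induction n)
  case 0 then show ?case by (simp add: frame_def)
next
  case (Suc n)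
  show ?case unfolding frame_def
  proof (intro allI impI)
    fix i j assume i: "i < d^Suc n" and j: "j < d^Suc n"
    have i': "i < d^n * d" and j': "j < d^n * d" using i j by (auto simp: mult.commute)
    have id: "i div d < d^n" "j div d < d^n" using i' j' d by (auto simp: less_mult_imp_div_less)
    have im: "i mod d < d" "j mod d < d" using d by auto
    have "(\<Sum>l<d^Suc n. wv d u (Suc n) l i * cnj (wv d u (Suc n) l j))
       = (\<Sum>l<d^n*d. wv d u n (l div d) (i div d) * cnj (wv d u n (l div d) (j div d)) * (u (l mod d) (i mod d) * cnj (u (l mod d) (j mod d))))"
      by (simp add: mult.commute mult.left_commute)
    also have "\<dots> = (\<Sum>a<d^n. \<Sum>b<d. wv d u n a (i div d) * cnj (wv d u n a (j div d)) * (u b (i mod d) * cnj (u b (j mod d))))"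
      by (rule sum_div_mod[OF d])
    also have "\<dots> = (\<Sum>a<d^n. wv d u n a (i div d) * cnj (wv d u n a (j div d))) * (\<Sum>b<d. u b (i mod d) * cnj (u b (j mod d)))"
      by (simp add: sum_product)
    also have "\<dots> = (if i div d = j div d then 1 else 0) * (if i mod d = j mod d then 1 else 0)"
      using Suc[unfolded frame_def] u[unfolded frame_def] id im by simp
    also have "\<dots> = (if i = j then 1 else 0)"
    proof -
      have "(i div d = j div d \<and> i mod d = j mod d) \<longleftrightarrow> i = j" by (metis div_mult_mod_eq)
      then show ?thesis by auto
    qed
    finally show "(\<Sum>l<d^Suc n. wv d u (Suc n) l i * cnj (wv d u (Suc n) l j)) = (if i = j then 1 else 0)" .
  qed
qed


definition testmat :: "nat \<Rightarrow> (nat \<Rightarrow> nat \<Rightarrow> complex) \<Rightarrow> nat set \<Rightarrow> complex mat" where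
  "testmat N w A = mat N N (\<lambda>(i,j). \<Sum>k\<in>A. w k i * cnj (w k j))"

lemma testmat_herm: "hermitian_mat N (testmat N w A)"
  unfolding hermitian_mat_def testmat_def by (auto simp: mult.commute)

lemma testmat_qf:
  assumes "finite A"
  shows "qf N (testmat N w A) v = (\<Sum>k\<in>A. of_real ((cmod (\<Sum>j<N. cnj (w k j) * v j))^2))"
proof -
  have "qf N (testmat N w A) v = (\<Sum>i<N. \<Sum>j<N. \<Sum>k\<in>A. cnj (v i) * w k i * (cnj (w k j) * v j))"
    unfolding qf_def testmat_def
    by (intro sum.cong refl) (simp add: sum_distrib_left sum_distrib_right mult_ac)
  also have "\<dots> = (\<Sum>k\<in>A. \<Sum>i<N. \<Sum>j<N. cnj (v i) * w k i * (cnj (w k j) * v j))"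
    by (simp add: sum.swap[of _ A])
  also have "\<dots> = (\<Sum>k\<in>A. (\<Sum>i<N. cnj (v i) * w k i) * (\<Sum>j<N. cnj (w k j) * v j))"
    by (simp add: sum_product)
  also have "\<dots> = (\<Sum>k\<in>A. cnj (\<Sum>j<N. cnj (w k j) * v j) * (\<Sum>j<N. cnj (w k j) * v j))"
    by (simp add: mult.commute)
  also have "\<dots> = (\<Sum>k\<in>A. of_real ((cmod (\<Sum>j<N. cnj (w k j) * v j))^2))"
    by (rule sum.cong[OF refl]) (metis complex_norm_square mult.commute of_real_power)
  finally show ?thesis .
qed

lemma testmat_psd: "finite A \<Longrightarrow> psd_mat N (testmat N w A)"
  by (rule psd_qfI[OF testmat_herm]) (simp add: testmat_qf sum_nonneg)

lemma testmat_compl: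
  assumes "frame N w" "A \<subseteq> {..<N}"
  shows "1\<^sub>m N - testmat N w A = testmat N w ({..<N} - A)"
proof (rule eq_matI)
  fix i j assume "i < dim_row (testmat N w ({..<N} - A))" "j < dim_col (testmat N w ({..<N} - A))"
  then have ij: "i < N" "j < N" by (auto simp: testmat_def)
  have fA: "finite A" using assms(2) finite_subset by blast
  have "(\<Sum>k\<in>{..<N} - A. w k i * cnj (w k j)) = (\<Sum>k<N. w k i * cnj (w k j)) - (\<Sum>k\<in>A. w k i * cnj (w k j))"
    using assms(2) by (simp add: sum_diff fA)
  then show "(1\<^sub>m N - testmat N w A) $$ (i, j) = testmat N w ({..<N} - A) $$ (i, j)"
    using ij assms(1) unfolding testmat_def frame_def by simp
qed (auto simp: testmat_def)

lemma testmat_test: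
  assumes "frame N w" "A \<subseteq> {..<N}"
  shows "test_op N (testmat N w A)"
  unfolding test_op_def using assms testmat_compl[OF assms]
  by (auto intro!: testmat_psd finite_subset[of A "{..<N}"])


lemma mtrace_mult:
  assumes "X \<in> carrier_mat N N" "T \<in> carrier_mat N N"
  shows "mtrace (X * T) = (\<Sum>i<N. \<Sum>j<N. X $$ (i,j) * T $$ (j,i))"
  using assms unfolding mtrace_def
  by (auto simp: scalar_prod_def atLeast0LessThan intro!: sum.cong)

lemma mtrace_testmat:
  assumes "X \<in> carrier_mat N N" "finite A"
  shows "mtrace (X * testmat N w A) = (\<Sum>k\<in>A. qf N X (w k))"
proof -
  have T: "testmat N w A \<in> carrier_mat N N" by (simp add: testmat_def)
  have "mtrace (X * testmat N w A) = (\<Sum>i<N. \<Sum>j<N. \<Sum>k\<in>A. cnj (w k i) * X $$ (i,j) * w k j)"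
    unfolding mtrace_mult[OF assms(1) T]
    by (intro sum.cong refl) (simp add: testmat_def sum_distrib_left mult_ac)
  also have "\<dots> = (\<Sum>k\<in>A. qf N X (w k))"
    unfolding qf_def by (simp add: sum.swap[of _ A])
  finally show ?thesis .
qed

lemma mtrace_split:
  assumes "X \<in> carrier_mat N N" "T \<in> carrier_mat N N"
  shows "mtrace (X * T) + mtrace (X * (1\<^sub>m N - T)) = mtrace X"
proof -
  have T2: "1\<^sub>m N - T \<in> carrier_mat N N" using assms(2) by (simp add: minus_carrier_mat)
  have "mtrace (X * T) + mtrace (X * (1\<^sub>m N - T)) = (\<Sum>i<N. \<Sum>j<N. X $$ (i,j) * (if j = i then 1 else 0))"
    unfolding mtrace_mult[OF assms] mtrace_mult[OF assms(1) T2] sum.distrib[symmetric]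
    using assms by (intro sum.cong refl) (auto simp: algebra_simps)
  also have "\<dots> = mtrace X" using assms unfolding mtrace_def
    by (simp add: if_distrib cong: if_cong)
  finally show ?thesis .
qed

lemma tp_carrier: "\<rho> \<in> carrier_mat d d \<Longrightarrow> tensor_pow \<rho> n \<in> carrier_mat (d^n) (d^n)"
  by (induction n) (auto simp: kron_def mult.commute)

lemma tp_Suc_index:
  assumes "\<rho> \<in> carrier_mat d d" "i < d^Suc n" "j < d^Suc n"
  shows "tensor_pow \<rho> (Suc n) $$ (i,j) = tensor_pow \<rho> n $$ (i div d, j div d) * \<rho> $$ (i mod d, j mod d)"
proof -
  have "i < d^n * d" "j < d^n * d" using assms(2,3) by (simp_all add: mult.commute)
  then show ?thesis using assms tp_carrier[OF assms(1), of n] by (simp add: kron_def)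
qed

lemma mtrace_tp:
  assumes "\<rho> \<in> carrier_mat d d" "0 < d"
  shows "mtrace (tensor_pow \<rho> n) = (mtrace \<rho>)^n"
proof (induction n)
  case 0 then show ?case by (simp add: mtrace_def)
next
  case (Suc n)
  have "mtrace (tensor_pow \<rho> (Suc n)) = (\<Sum>i<d^Suc n. tensor_pow \<rho> n $$ (i div d, i div d) * \<rho> $$ (i mod d, i mod d))"
    unfolding mtrace_def using tp_carrier[OF assms(1), of "Suc n"]
    by (intro sum.cong) (auto simp: tp_Suc_index[OF assms(1)] simp del: power_Suc tensor_pow.simps)
  also have "\<dots> = mtrace (tensor_pow \<rho> n) * mtrace \<rho>"
    unfolding sum_div_mod_pow[OF assms(2), where h="\<lambda>a b. tensor_pow \<rho> n $$ (a, a) * \<rho> $$ (b, b)"] mtrace_def using tp_carrier[OF assms(1), of n] assms(1)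
    by (simp add: sum_product)
  finally show ?case using Suc by simp
qed

lemma qf_tp:
  assumes "\<rho> \<in> carrier_mat d d" "0 < d"
  shows "qf (d^Suc n) (tensor_pow \<rho> (Suc n)) (wv d u (Suc n) k)
       = qf (d^n) (tensor_pow \<rho> n) (wv d u n (k div d)) * qf d \<rho> (u (k mod d))"
proof -
  let ?X = "tensor_pow \<rho> n" and ?w = "wv d u n (k div d)" and ?u = "u (k mod d)"
  have "qf (d^Suc n) (tensor_pow \<rho> (Suc n)) (wv d u (Suc n) k)
     = (\<Sum>i<d^Suc n. \<Sum>j<d^Suc n. (cnj (?w (i div d)) * ?X $$ (i div d, j div d) * ?w (j div d))
          * (cnj (?u (i mod d)) * \<rho> $$ (i mod d, j mod d) * ?u (j mod d)))"
    unfolding qf_def by (intro sum.cong refl) (simp add: tp_Suc_index[OF assms(1)] mult_ac del: power_Suc tensor_pow.simps)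
  also have "\<dots> = (\<Sum>i1<d^n. \<Sum>i2<d. \<Sum>j1<d^n. \<Sum>j2<d. (cnj (?w i1) * ?X $$ (i1, j1) * ?w j1)
          * (cnj (?u i2) * \<rho> $$ (i2, j2) * ?u j2))"
    by (rule sum_div_mod_pow2[OF assms(2), where F="\<lambda>i1 i2 j1 j2. (cnj (?w i1) * ?X $$ (i1, j1) * ?w j1)
          * (cnj (?u i2) * \<rho> $$ (i2, j2) * ?u j2)"])
  also have "\<dots> = qf (d^n) ?X ?w * qf d \<rho> ?u"
    unfolding qf_def by (simp add: sum_product)
  finally show ?thesis .
qed

fun prodf :: "nat \<Rightarrow> (nat \<Rightarrow> real) \<Rightarrow> nat \<Rightarrow> nat \<Rightarrow> real" where
  "prodf d g 0 k = 1"
| "prodf d g (Suc n) k = prodf d g n (k div d) * g (k mod d)"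

lemma sum_prodf: "0 < d \<Longrightarrow> (\<Sum>k<d^n. prodf d g n k) = (\<Sum>l<d. g l)^n"
proof (induction n)
  case (Suc n)
  have "(\<Sum>k<d^Suc n. prodf d g (Suc n) k) = (\<Sum>k<d^Suc n. prodf d g n (k div d) * g (k mod d))"
    by simp
  also have "\<dots> = (\<Sum>l<d. g l)^Suc n"
    unfolding sum_div_mod_pow[OF Suc(2), where h="\<lambda>a b. prodf d g n a * g b"] using Suc
    by (simp add: sum_product[symmetric] power_Suc2 del: power_Suc)
  finally show ?case .
qed simp

lemma prodf_nonneg: "(\<And>l. 0 \<le> g l) \<Longrightarrow> 0 \<le> prodf d g n k"
  by (induction n arbitrary: k) auto

lemma prodf_sqrt: "prodf d (\<lambda>l. sqrt (g l * h l)) n k = sqrt (prodf d g n k * prodf d h n k)"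
  by (induction n arbitrary: k) (auto simp: real_sqrt_mult mult_ac)

lemma qf_tp_prodf:
  assumes "\<rho> \<in> carrier_mat d d" "0 < d" "\<And>l. qf d \<rho> (u l) = of_real (p l)"
  shows "qf (d^n) (tensor_pow \<rho> n) (wv d u n k) = of_real (prodf d p n k)"
proof (induction n arbitrary: k)
  case 0 then show ?case by (simp add: qf_def)
next
  case (Suc n) then show ?case by (subst qf_tp[OF assms(1,2)]) (simp add: assms(3))
qed


lemma sqrt_lt_am:
  assumes "0 \<le> x" "0 \<le> y" "x \<noteq> y"
  shows "sqrt (x * y) < (x + y) / 2"
proof -
  have le: "sqrt (x * y) \<le> (x + y) / 2" using arith_geo_mean_sqrt assms by blast
  have "sqrt (x * y) \<noteq> (x + y) / 2"
  proof
    assume "sqrt (x * y) = (x + y) / 2"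
    then have "x * y = ((x + y) / 2)^2" using assms by (metis mult_nonneg_nonneg real_sqrt_pow2)
    then have "(x - y)^2 = 0" by (simp add: power2_eq_square field_simps)
    then show False using assms by simp
  qed
  then show ?thesis using le by simp
qed

lemma renyi_lower:
  assumes a: "0 < \<alpha>" "\<alpha> < 1" and G: "0 < G" "G < 1"
    and nn: "0 \<le> a" "a \<le> 1" "0 \<le> b" "0 \<le> a'" "0 \<le> b'" "b' \<le> 1"
    and bF: "b \<le> G^n" and aF: "a' \<le> G^n"
  shows "ereal ((min \<alpha> (1-\<alpha>) * (- ln G) / (1-\<alpha>)) * real n - ln 2 / (1-\<alpha>)) \<le> renyi2 \<alpha> (a, a') (b, b')"
proof -
  define m where "m = min \<alpha> (1-\<alpha>)"
  have m: "0 < m" "m \<le> \<alpha>" "m \<le> 1 - \<alpha>" using a by (auto simp: m_def)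
  define s where "s = a powr \<alpha> * b powr (1 - \<alpha>) + a' powr \<alpha> * b' powr (1 - \<alpha>)"
  have s0: "0 \<le> s" unfolding s_def by simp
  have Gn: "G^n = G powr real n" using G by (simp add: powr_realpow)
  have "a powr \<alpha> \<le> 1" using nn a by (intro powr_le1) auto
  then have t1: "a powr \<alpha> * b powr (1 - \<alpha>) \<le> b powr (1 - \<alpha>)"
    by (simp add: mult_left_le_one_le)
  have "b' powr (1-\<alpha>) \<le> 1" using nn a by (intro powr_le1) auto
  then have t2: "a' powr \<alpha> * b' powr (1 - \<alpha>) \<le> a' powr \<alpha>"
    by (simp add: mult_right_le_one_le)
  have "b powr (1 - \<alpha>) \<le> (G powr real n) powr (1 - \<alpha>)"
    using bF nn a Gn by (intro powr_mono2) auto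
  also have "\<dots> = G powr (real n * (1 - \<alpha>))" by (simp add: powr_powr)
  also have "\<dots> \<le> G powr (real n * m)" using G m by (intro powr_mono') (auto intro: mult_left_mono)
  finally have t3: "b powr (1 - \<alpha>) \<le> G powr (real n * m)" .
  have "a' powr \<alpha> \<le> (G powr real n) powr \<alpha>"
    using aF nn a Gn by (intro powr_mono2) auto
  also have "\<dots> = G powr (real n * \<alpha>)" by (simp add: powr_powr)
  also have "\<dots> \<le> G powr (real n * m)" using G m by (intro powr_mono') (auto intro: mult_left_mono)
  finally have t4: "a' powr \<alpha> \<le> G powr (real n * m)" .
  have sle: "s \<le> 2 * G powr (real n * m)" unfolding s_def using t1 t2 t3 t4 by linarith
  show ?thesis
  proof (cases "s = 0")
    case True
    then show ?thesis unfolding renyi2_def s_def by simp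
  next
    case False
    then have spos: "0 < s" using s0 by simp
    have "0 < 2 * G powr (real n * m)" using G by simp
    then have "ln s \<le> ln (2 * G powr (real n * m))" using spos sle by simp
    also have "\<dots> = ln 2 + real n * m * ln G" using G by (simp add: ln_mult ln_powr)
    finally have lns: "ln s \<le> ln 2 + real n * m * ln G" .
    have "(m * (- ln G) / (1-\<alpha>)) * real n - ln 2 / (1-\<alpha>) = (ln 2 + real n * m * ln G) / (\<alpha> - 1)"
    proof -
      have e1: "\<alpha> - 1 = - (1 - \<alpha>)" by simp
      have "(ln 2 + real n * m * ln G) / (\<alpha> - 1) = - ((ln 2 + real n * m * ln G) / (1 - \<alpha>))"
        unfolding e1 by (rule divide_minus_right)
      also have "\<dots> = (m * (- ln G) / (1-\<alpha>)) * real n - ln 2 / (1-\<alpha>)"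
        by (simp add: add_divide_distrib diff_divide_distrib times_divide_eq_left mult_ac)
      finally show ?thesis by simp
    qed
    also have "\<dots> \<le> ln s / (\<alpha> - 1)"
      using lns a by (intro divide_right_mono_neg) auto
    finally have "(m * (- ln G) / (1-\<alpha>)) * real n - ln 2 / (1-\<alpha>) \<le> ln s / (\<alpha> - 1)" .
    then show ?thesis unfolding renyi2_def Let_def using False by (simp add: s_def m_def)
  qed
qed


lemma density_carrier: "density_op d \<rho> \<Longrightarrow> \<rho> \<in> carrier_mat d d"
  unfolding density_op_def psd_mat_def hermitian_mat_def by simp

lemma density_dpos: "density_op d \<rho> \<Longrightarrow> 0 < d"
proof (rule ccontr)
  assume a: "density_op d \<rho>" "\<not> 0 < d"
  then have "dim_row \<rho> = 0" using density_carrier[OF a(1)] by simp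
  then have "mtrace \<rho> = 0" by (simp add: mtrace_def)
  then show False using a(1) by (simp add: density_op_def)
qed

lemma sum_qf_frame:
  assumes "frame d u" "\<rho> \<in> carrier_mat d d"
  shows "(\<Sum>l<d. qf d \<rho> (u l)) = mtrace \<rho>"
proof -
  have "(\<Sum>l<d. qf d \<rho> (u l)) = (\<Sum>l<d. \<Sum>i<d. \<Sum>j<d. \<rho> $$ (i,j) * (u l j * cnj (u l i)))"
    unfolding qf_def by (simp add: mult_ac)
  also have "\<dots> = (\<Sum>i<d. \<Sum>l<d. \<Sum>j<d. \<rho> $$ (i,j) * (u l j * cnj (u l i)))" by (rule sum.swap)
  also have "\<dots> = (\<Sum>i<d. \<Sum>j<d. \<Sum>l<d. \<rho> $$ (i,j) * (u l j * cnj (u l i)))"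
    by (rule sum.cong[OF refl]) (rule sum.swap)
  also have "\<dots> = (\<Sum>i<d. \<Sum>j<d. \<rho> $$ (i,j) * (\<Sum>l<d. u l j * cnj (u l i)))"
    by (simp add: sum_distrib_left)
  also have "\<dots> = (\<Sum>i<d. \<Sum>j<d. \<rho> $$ (i,j) * (if j = i then 1 else 0))"
    using assms(1) unfolding frame_def by (intro sum.cong refl) simp
  also have "\<dots> = mtrace \<rho>" using assms(2) unfolding mtrace_def
    by (simp add: if_distrib cong: if_cong)
  finally show ?thesis .
qed

lemma channel_testmat:
  assumes d: "0 < d" and u: "frame d u" and \<rho>: "\<rho> \<in> carrier_mat d d"
    and hp: "\<And>l. qf d \<rho> (u l) = of_real (p l)" and A: "A \<subseteq> {..<d^n}"
  shows "test_channel (testmat (d^n) (wv d u n) A) (tensor_pow \<rho> n)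
       = (\<Sum>k\<in>A. prodf d p n k, \<Sum>k\<in>{..<d^n}-A. prodf d p n k)"
proof -
  have X: "tensor_pow \<rho> n \<in> carrier_mat (d^n) (d^n)" by (rule tp_carrier[OF \<rho>])
  have fA: "finite A" using A finite_subset by blast
  have dr: "dim_row (tensor_pow \<rho> n) = d^n" using X by simp
  show ?thesis
    unfolding test_channel_def dr testmat_compl[OF frame_wv[OF d u] A]
    unfolding mtrace_testmat[OF X fA] mtrace_testmat[OF X finite_Diff[OF finite_lessThan]]
    by (simp add: qf_tp_prodf[OF \<rho> d hp])
qed


lemma pos_case:
  assumes a: "0 < \<alpha>" "\<alpha> < 1" and u: "frame d u"
    and \<rho>: "density_op d \<rho>" and \<sigma>: "density_op d \<sigma>"
    and l0: "l0 < d" and neq: "qf d \<rho> (u l0) \<noteq> qf d \<sigma> (u l0)"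
  shows "0 < D_test_reg \<alpha> d \<rho> \<sigma>"
proof -
  have d: "0 < d" by (rule density_dpos[OF \<rho>])
  have \<rho>c: "\<rho> \<in> carrier_mat d d" and \<sigma>c: "\<sigma> \<in> carrier_mat d d"
    using density_carrier \<rho> \<sigma> by auto
  have \<rho>p: "psd_mat d \<rho>" and \<sigma>p: "psd_mat d \<sigma>" using \<rho> \<sigma> by (auto simp: density_op_def)
  define p where "p l = Re (qf d \<rho> (u l))" for l
  define q where "q l = Re (qf d \<sigma> (u l))" for l
  have hp: "qf d \<rho> (u l) = of_real (p l)" for l
    unfolding p_def using \<rho>p herm_qf_real psd_mat_def by blast
  have hq: "qf d \<sigma> (u l) = of_real (q l)" for l
    unfolding q_def using \<sigma>p herm_qf_real psd_mat_def by blast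
  have p0: "0 \<le> p l" for l unfolding p_def by (rule psd_qf[OF \<rho>p])
  have q0: "0 \<le> q l" for l unfolding q_def by (rule psd_qf[OF \<sigma>p])
  have sp: "(\<Sum>l<d. p l) = 1"
  proof -
    have "(\<Sum>l<d. p l) = Re (\<Sum>l<d. qf d \<rho> (u l))" unfolding p_def by simp
    also have "\<dots> = 1" using sum_qf_frame[OF u \<rho>c] \<rho> by (simp add: density_op_def)
    finally show ?thesis .
  qed
  have sq: "(\<Sum>l<d. q l) = 1"
  proof -
    have "(\<Sum>l<d. q l) = Re (\<Sum>l<d. qf d \<sigma> (u l))" unfolding q_def by simp
    also have "\<dots> = 1" using sum_qf_frame[OF u \<sigma>c] \<sigma> by (simp add: density_op_def)
    finally show ?thesis .
  qed
  have pq: "p l0 \<noteq> q l0" using neq hp hq by metis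
  define F where "F = (\<Sum>l<d. sqrt (p l * q l))"
  have F0: "0 \<le> F" unfolding F_def by (simp add: sum_nonneg p0 q0)
  have "F < (\<Sum>l<d. (p l + q l) / 2)"
    unfolding F_def
    by (rule sum_strict_mono_ex1) (use p0 q0 arith_geo_mean_sqrt sqrt_lt_am[OF p0 q0 pq] l0 in auto)
  also have "\<dots> = 1" using sp sq by (simp add: sum_divide_distrib[symmetric] sum.distrib)
  finally have F1: "F < 1" .
  define G where "G = max F (1/2)"
  have G: "0 < G" "G < 1" "F \<le> G" using F1 by (auto simp: G_def)
  define c where "c = min \<alpha> (1-\<alpha>) * (- ln G) / (1-\<alpha>)"
  define C where "C = ln 2 / (1 - \<alpha>)"
  have c: "0 < c"
  proof -
    have "ln G < 0" using G by simp
    moreover have "0 < min \<alpha> (1-\<alpha>)" "0 < 1 - \<alpha>" using a by auto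
    ultimately show ?thesis unfolding c_def by (intro divide_pos_pos mult_pos_pos) auto
  qed
  let ?D = "\<lambda>n. D_test \<alpha> (d ^ n) (tensor_pow \<rho> n) (tensor_pow \<sigma> n)"
  have key: "ereal (c * real n - C) \<le> ?D n" for n
  proof -
    let ?P = "prodf d p n" and ?Q = "prodf d q n"
    define A where "A = {k\<in>{..<d^n}. ?Q k \<le> ?P k}"
    have A: "A \<subseteq> {..<d^n}" unfolding A_def by auto
    have fA: "finite A" using A finite_subset by blast
    have P0: "0 \<le> ?P k" for k by (rule prodf_nonneg[OF p0])
    have Q0: "0 \<le> ?Q k" for k by (rule prodf_nonneg[OF q0])
    have Fn: "(\<Sum>k<d^n. sqrt (?P k * ?Q k)) = F^n"
      unfolding F_def prodf_sqrt[symmetric] by (rule sum_prodf[OF d])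
    have SP: "(\<Sum>k<d^n. ?P k) = 1" using sum_prodf[OF d, of p n] sp by simp
    have SQ: "(\<Sum>k<d^n. ?Q k) = 1" using sum_prodf[OF d, of q n] sq by simp
    have sqrt_nn: "0 \<le> sqrt (?P k * ?Q k)" for k using P0 Q0 by simp
    have "(\<Sum>k\<in>A. ?Q k) \<le> (\<Sum>k\<in>A. sqrt (?P k * ?Q k))"
    proof (rule sum_mono)
      fix k assume "k \<in> A"
      then have "?Q k \<le> ?P k" unfolding A_def by auto
      then have "sqrt (?Q k * ?Q k) \<le> sqrt (?P k * ?Q k)" using Q0 by (intro real_sqrt_le_mono mult_right_mono) auto
      then show "?Q k \<le> sqrt (?P k * ?Q k)" using Q0[of k] by simp
    qed
    also have "\<dots> \<le> (\<Sum>k<d^n. sqrt (?P k * ?Q k))" using A sqrt_nn by (intro sum_mono2) auto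
    finally have bF: "(\<Sum>k\<in>A. ?Q k) \<le> G^n" using Fn power_mono[OF G(3) F0, of n] by simp
    have "(\<Sum>k\<in>{..<d^n}-A. ?P k) \<le> (\<Sum>k\<in>{..<d^n}-A. sqrt (?P k * ?Q k))"
    proof (rule sum_mono)
      fix k assume "k \<in> {..<d^n}-A"
      then have "?P k \<le> ?Q k" unfolding A_def by auto
      then have "sqrt (?P k * ?P k) \<le> sqrt (?P k * ?Q k)" using P0 by (intro real_sqrt_le_mono mult_left_mono) auto
      then show "?P k \<le> sqrt (?P k * ?Q k)" using P0[of k] by simp
    qed
    also have "\<dots> \<le> (\<Sum>k<d^n. sqrt (?P k * ?Q k))" using sqrt_nn by (intro sum_mono2) auto
    finally have aF: "(\<Sum>k\<in>{..<d^n}-A. ?P k) \<le> G^n" using Fn power_mono[OF G(3) F0, of n] by simp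
    have a1: "(\<Sum>k\<in>A. ?P k) \<le> 1" using A P0 SP sum_mono2[of "{..<d^n}" A ?P] by auto
    have b1: "(\<Sum>k\<in>{..<d^n}-A. ?Q k) \<le> 1" using Q0 SQ sum_mono2[of "{..<d^n}" "{..<d^n}-A" ?Q] by auto
    have "ereal (c * real n - C) \<le> renyi2 \<alpha> (\<Sum>k\<in>A. ?P k, \<Sum>k\<in>{..<d^n}-A. ?P k) (\<Sum>k\<in>A. ?Q k, \<Sum>k\<in>{..<d^n}-A. ?Q k)"
      unfolding c_def C_def
      by (rule renyi_lower[OF a G(1,2) _ a1 _ _ _ b1 bF aF]) (auto intro: sum_nonneg P0 Q0)
    also have "\<dots> = renyi2 \<alpha> (test_channel (testmat (d^n) (wv d u n) A) (tensor_pow \<rho> n))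
                          (test_channel (testmat (d^n) (wv d u n) A) (tensor_pow \<sigma> n))"
      by (simp add: channel_testmat[OF d u \<rho>c hp A] channel_testmat[OF d u \<sigma>c hq A])
    also have "\<dots> \<le> ?D n"
      unfolding D_test_def by (rule SUP_upper) (simp add: testmat_test[OF frame_wv[OF d u] A])
    finally show ?thesis .
  qed
  define N where "N = nat (ceiling (2 * C / c)) + 1"
  have ev: "\<forall>\<^sub>F n in sequentially. ereal (c / 2) \<le> ?D n / ereal (real n)"
  proof (rule eventually_sequentiallyI[of N])
    fix n assume n: "N \<le> n"
    then have npos: "0 < real n" unfolding N_def by simp
    have "2 * C / c \<le> real n" using n unfolding N_def by linarith
    then have "2 * C \<le> c * real n" using c by (simp add: divide_le_eq mult.commute)
    then have "c / 2 \<le> (c * real n - C) / real n" using npos by (simp add: field_simps)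
    then have "ereal (c / 2) \<le> ereal (c * real n - C) / ereal (real n)" using npos by simp
    also have "\<dots> \<le> ?D n / ereal (real n)"
      by (rule ereal_divide_right_mono[OF key]) (use npos in simp)
    finally show "ereal (c / 2) \<le> ?D n / ereal (real n)" .
  qed
  have "ereal (c / 2) \<le> D_test_reg \<alpha> d \<rho> \<sigma>"
    unfolding D_test_reg_def by (rule le_Limsup[OF _ ev]) simp
  moreover have "0 < ereal (c / 2)" using c by simp
  ultimately show ?thesis by (rule order.strict_trans2[rotated])
qed


definition stdb :: "nat \<Rightarrow> nat \<Rightarrow> complex" where
  "stdb l a = (if l = a then 1 else 0)"

lemma frame_stdb: "frame d stdb"
  unfolding frame_def
proof (intro allI impI)
  fix i j assume ij: "i < d" "j < d"
  have "(\<Sum>l<d. stdb l i * cnj (stdb l j)) = (\<Sum>l<d. if l = i then (if i = j then 1 else 0) else 0)"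
    by (intro sum.cong refl) (simp add: stdb_def)
  also have "\<dots> = (if i = j then 1 else 0)" using ij by (subst sum.delta) auto
  finally show "(\<Sum>l<d. stdb l i * cnj (stdb l j)) = (if i = j then 1 else 0)" .
qed

lemma qf_stdb:
  assumes "l < d" shows "qf d A (stdb l) = A $$ (l,l)"
proof -
  have "qf d A (stdb l) = (\<Sum>a<d. if a = l then (\<Sum>b<d. if b = l then A $$ (l,l) else 0) else 0)"
    unfolding qf_def
  proof (rule sum.cong[OF refl])
    fix a assume "a \<in> {..<d}"
    show "(\<Sum>b<d. cnj (stdb l a) * A $$ (a, b) * stdb l b) = (if a = l then (\<Sum>b<d. if b = l then A $$ (l,l) else 0) else 0)"
    proof (cases "a = l")
      case True
      have "\<And>b. cnj (stdb l l) * A$$(l,b) * stdb l b = (if b = l then A$$(l,l) else 0)"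
        by (simp add: stdb_def)
      then show ?thesis using True by simp
    qed (simp add: stdb_def)
  qed
  also have "\<dots> = A $$ (l,l)" using assms by (simp add: sum.delta)
  finally show ?thesis .
qed

definition rot :: "complex \<Rightarrow> nat \<Rightarrow> nat \<Rightarrow> nat \<Rightarrow> nat \<Rightarrow> complex" where
  "rot c i j l a = (if l = i then (if a = i then 1 else if a = j then c else 0) / complex_of_real (sqrt 2)
     else if l = j then (if a = i then 1 else if a = j then - c else 0) / complex_of_real (sqrt 2)
     else if l = a then 1 else 0)"

lemma sum_split2:
  assumes "i \<noteq> j" "i < d" "j < (d::nat)"
  shows "(\<Sum>l<d. f l) = f i + f j + (\<Sum>l\<in>{..<d}-{i,j}. f l)"
proof -
  have "(\<Sum>l<d. f l) = (\<Sum>l\<in>{..<d}-{i,j}. f l) + (\<Sum>l\<in>{i,j}. f l)"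
    using assms by (intro sum.subset_diff) auto
  then show ?thesis using assms by (simp add: ac_simps)
qed

lemma sum_two:
  assumes "i \<noteq> j" "i < d" "j < (d::nat)" "\<And>a. a < d \<Longrightarrow> a \<noteq> i \<Longrightarrow> a \<noteq> j \<Longrightarrow> g a = 0"
  shows "(\<Sum>a<d. g a) = g i + g j"
  using sum_split2[OF assms(1-3), of g] assms(4) by simp

lemma rest_delta:
  fixes d :: nat
  shows "(\<Sum>l\<in>{..<d}-{i,j}. (if l = a then 1 else 0) * (if l = b then 1 else (0::complex)))
     = (if a = b \<and> a < d \<and> a \<noteq> i \<and> a \<noteq> j then 1 else 0)"
proof -
  have "\<And>l. (if l = a then 1 else 0) * (if l = b then 1 else (0::complex)) = (if l = a then (if a = b then 1 else 0) else 0)"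
    by auto
  then have "(\<Sum>l\<in>{..<d}-{i,j}. (if l = a then 1 else 0) * (if l = b then 1 else (0::complex)))
      = (\<Sum>l\<in>{..<d}-{i,j}. if l = a then (if a = b then 1 else 0) else 0)" by simp
  also have "\<dots> = (if a \<in> {..<d}-{i,j} then (if a = b then 1 else 0) else 0)"
    by (rule sum.delta) simp
  finally show ?thesis by auto
qed

lemma sqrt2_facts: "complex_of_real (sqrt 2) * complex_of_real (sqrt 2) = 2" "complex_of_real (sqrt 2) \<noteq> 0"
  by (simp_all flip: of_real_mult)

lemma frame_rot:
  assumes ij: "i \<noteq> j" "i < d" "j < d" and c: "c * cnj c = 1"
  shows "frame d (rot c i j)"
  unfolding frame_def
proof (intro allI impI)
  fix a b assume ab: "a < d" "b < d"
  have rest: "(\<Sum>l\<in>{..<d}-{i,j}. rot c i j l a * cnj (rot c i j l b))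
     = (\<Sum>l\<in>{..<d}-{i,j}. (if l = a then 1 else 0) * (if l = b then 1 else (0::complex)))"
    by (intro sum.cong refl) (auto simp: rot_def)
  let ?t = "complex_of_real (sqrt 2)"
  have t: "?t * ?t = 2" "?t \<noteq> 0" by (rule sqrt2_facts)+
  have "rot c i j i a * cnj (rot c i j i b) + rot c i j j a * cnj (rot c i j j b)
     + (if a = b \<and> a < d \<and> a \<noteq> i \<and> a \<noteq> j then 1 else 0) = (if a = b then 1 else 0)"
    using ij c t ab by (auto simp: rot_def field_simps)
  then show "(\<Sum>l<d. rot c i j l a * cnj (rot c i j l b)) = (if a = b then 1 else 0)"
    unfolding sum_split2[OF ij] rest rest_delta .
qed

lemma qf_rot:
  assumes ij: "i \<noteq> j" "i < d" "j < d" and c: "c * cnj c = 1"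
  shows "qf d A (rot c i j i) = (A $$ (i,i) + c * A $$ (i,j) + cnj c * A $$ (j,i) + A $$ (j,j)) / 2"
proof -
  let ?t = "complex_of_real (sqrt 2)"
  have t: "?t * ?t = 2" "?t \<noteq> 0" by (rule sqrt2_facts)+
  have "qf d A (rot c i j i) = (\<Sum>a<d. cnj (rot c i j i a) * A $$ (a, i) * rot c i j i i + cnj (rot c i j i a) * A $$ (a, j) * rot c i j i j)"
    unfolding qf_def by (intro sum.cong refl sum_two[OF ij]) (auto simp: rot_def)
  also have "\<dots> = (cnj (rot c i j i i) * A $$ (i, i) * rot c i j i i + cnj (rot c i j i i) * A $$ (i, j) * rot c i j i j)
     + (cnj (rot c i j i j) * A $$ (j, i) * rot c i j i i + cnj (rot c i j i j) * A $$ (j, j) * rot c i j i j)"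
    by (rule sum_two[OF ij]) (auto simp: rot_def)
  also have "\<dots> = (A $$ (i,i) + c * A $$ (i,j) + cnj c * A $$ (j,i) + A $$ (j,j)) / 2"
    using ij c t by (simp add: rot_def field_simps)
  finally show ?thesis .
qed


lemma renyi2_self:
  assumes "\<alpha> < 1" "x + y = 1"
  shows "renyi2 \<alpha> (x,y) (x,y) \<le> 0"
proof -
  have e: "z powr \<alpha> * z powr (1 - \<alpha>) = z powr 1" for z :: real
    by (simp flip: powr_add)
  define s where "s = x powr 1 + y powr 1"
  have s1: "1 \<le> s" unfolding s_def using le_powr_one[of x] le_powr_one[of y] assms(2) by linarith
  have "0 \<le> ln s" using s1 by simp
  then have "ln s / (\<alpha> - 1) \<le> 0" using assms(1) by (intro divide_nonneg_neg) auto
  moreover have "renyi2 \<alpha> (x,y) (x,y) = (if s = 0 then \<infinity> else ereal (ln s / (\<alpha> - 1)))"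
    unfolding renyi2_def Let_def s_def by (simp only: fst_conv snd_conv e)
  ultimately show ?thesis using s1 by simp
qed

lemma test_carrier: "test_op N T \<Longrightarrow> T \<in> carrier_mat N N"
  unfolding test_op_def psd_mat_def hermitian_mat_def by simp

lemma D_test_nonneg:
  assumes "X \<in> carrier_mat N N" "Y \<in> carrier_mat N N" "mtrace X = 1" "mtrace Y = 1"
  shows "0 \<le> D_test \<alpha> N X Y"
proof -
  let ?T = "testmat N stdb {}"
  have T: "?T \<in> carrier_mat N N" by (simp add: testmat_def)
  have ch: "test_channel ?T Z = (0, 1)" if Z: "Z \<in> carrier_mat N N" "mtrace Z = 1" for Z
  proof -
    have m0: "mtrace (Z * ?T) = 0" using mtrace_testmat[OF Z(1), of "{}" stdb] by simp
    have "mtrace (Z * ?T) + mtrace (Z * (1\<^sub>m N - ?T)) = 1" using mtrace_split[OF Z(1) T] Z(2) by simp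
    then have "mtrace (Z * (1\<^sub>m N - ?T)) = 1" using m0 by simp
    then show ?thesis unfolding test_channel_def using m0 Z(1) by simp
  qed
  have "renyi2 \<alpha> (test_channel ?T X) (test_channel ?T Y) = 0"
    unfolding ch[OF assms(1,3)] ch[OF assms(2,4)] renyi2_def by simp
  moreover have "renyi2 \<alpha> (test_channel ?T X) (test_channel ?T Y) \<le> D_test \<alpha> N X Y"
    unfolding D_test_def by (rule SUP_upper) (simp add: testmat_test[OF frame_stdb])
  ultimately show ?thesis by simp
qed

lemma D_test_self:
  assumes "\<alpha> < 1" "X \<in> carrier_mat N N" "mtrace X = 1"
  shows "D_test \<alpha> N X X \<le> 0"
  unfolding D_test_def
proof (rule SUP_least)
  fix T assume "T \<in> {T. test_op N T}"
  then have T: "T \<in> carrier_mat N N" by (simp add: test_carrier)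
  have dr: "dim_row X = N" using assms(2) by simp
  have "fst (test_channel T X) + snd (test_channel T X) = Re (mtrace X)"
    unfolding test_channel_def dr using mtrace_split[OF assms(2) T] by (metis fst_conv plus_complex.sel(1) snd_conv)
  then have "fst (test_channel T X) + snd (test_channel T X) = 1" using assms(3) by simp
  then show "renyi2 \<alpha> (test_channel T X) (test_channel T X) \<le> 0"
    using renyi2_self[OF assms(1)] by (metis prod.collapse)
qed

lemma ereal_div_nat_nonneg: "0 \<le> x \<Longrightarrow> 0 < n \<Longrightarrow> 0 \<le> x / ereal (real n)"
  using ereal_divide_right_mono[of 0 x "ereal (real n)"] by simp

theorem mainTheorem11:
  fixes \<alpha> :: real and d :: nat and \<rho> \<sigma> :: "complex mat"
  assumes "0 < \<alpha>" and "\<alpha> < 1"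
    and "density_op d \<rho>" and "density_op d \<sigma>"
  shows "0 \<le> D_test_reg \<alpha> d \<rho> \<sigma> \<and> (D_test_reg \<alpha> d \<rho> \<sigma> = 0 \<longleftrightarrow> \<rho> = \<sigma>)"
proof -
  have d: "0 < d" by (rule density_dpos[OF assms(3)])
  have \<rho>c: "\<rho> \<in> carrier_mat d d" and \<sigma>c: "\<sigma> \<in> carrier_mat d d"
    using density_carrier assms(3,4) by auto
  have tr\<rho>: "mtrace (tensor_pow \<rho> n) = 1" for n
    using mtrace_tp[OF \<rho>c d] assms(3) by (simp add: density_op_def)
  have tr\<sigma>: "mtrace (tensor_pow \<sigma> n) = 1" for n
    using mtrace_tp[OF \<sigma>c d] assms(4) by (simp add: density_op_def)
  let ?D = "\<lambda>n. D_test \<alpha> (d ^ n) (tensor_pow \<rho> n) (tensor_pow \<sigma> n)"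
  have Dn: "0 \<le> ?D n" for n
    by (rule D_test_nonneg[OF tp_carrier[OF \<rho>c] tp_carrier[OF \<sigma>c] tr\<rho> tr\<sigma>])
  have nonneg: "0 \<le> D_test_reg \<alpha> d \<rho> \<sigma>"
    unfolding D_test_reg_def
  proof (rule le_Limsup)
    show "\<forall>\<^sub>F n in sequentially. 0 \<le> ?D n / ereal (real n)"
      by (rule eventually_sequentiallyI[of 1]) (simp add: ereal_div_nat_nonneg[OF Dn])
  qed simp
  have iff: "D_test_reg \<alpha> d \<rho> \<sigma> = 0 \<longleftrightarrow> \<rho> = \<sigma>"
  proof
    assume eq: "\<rho> = \<sigma>"
    have "?D n = 0" for n
      using D_test_self[OF assms(2) tp_carrier[OF \<rho>c] tr\<rho>, of n] Dn[of n] eq by simp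
    then show "D_test_reg \<alpha> d \<rho> \<sigma> = 0" unfolding D_test_reg_def by (simp add: Limsup_const)
  next
    assume z: "D_test_reg \<alpha> d \<rho> \<sigma> = 0"
    show "\<rho> = \<sigma>"
    proof (rule ccontr)
      assume ne: "\<rho> \<noteq> \<sigma>"
      have "\<exists>i<d. \<exists>j<d. \<rho> $$ (i,j) \<noteq> \<sigma> $$ (i,j)"
      proof (rule ccontr)
        assume "\<not> ?thesis"
        then have "\<rho> = \<sigma>" using \<rho>c \<sigma>c by (intro eq_matI) auto
        then show False using ne by simp
      qed
      then obtain i j where ij: "i < d" "j < d" "\<rho> $$ (i,j) \<noteq> \<sigma> $$ (i,j)" by blast
      have pos: "0 < D_test_reg \<alpha> d \<rho> \<sigma>"
      proof (cases "\<exists>l<d. \<rho> $$ (l,l) \<noteq> \<sigma> $$ (l,l)")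
        case True
        then obtain l where l: "l < d" "\<rho> $$ (l,l) \<noteq> \<sigma> $$ (l,l)" by blast
        show ?thesis
          by (rule pos_case[OF assms(1,2) frame_stdb assms(3,4) l(1)]) (simp add: qf_stdb l)
      next
        case False
        then have diag: "\<And>l. l < d \<Longrightarrow> \<rho> $$ (l,l) = \<sigma> $$ (l,l)" by blast
        then have ijne: "i \<noteq> j" using ij by auto
        have h\<rho>: "\<rho> $$ (j,i) = cnj (\<rho> $$ (i,j))"
          using assms(3) ij unfolding density_op_def psd_mat_def hermitian_mat_def by blast
        have h\<sigma>: "\<sigma> $$ (j,i) = cnj (\<sigma> $$ (i,j))"
          using assms(4) ij unfolding density_op_def psd_mat_def hermitian_mat_def by blast
        have "\<exists>c. c * cnj c = 1 \<and> qf d \<rho> (rot c i j i) \<noteq> qf d \<sigma> (rot c i j i)"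
        proof (rule ccontr)
          assume "\<not> ?thesis"
          then have all: "\<And>c. c * cnj c = 1 \<Longrightarrow> qf d \<rho> (rot c i j i) = qf d \<sigma> (rot c i j i)" by blast
          have R: "Re (c * \<rho> $$ (i,j)) = Re (c * \<sigma> $$ (i,j))" if c: "c * cnj c = 1" for c
          proof -
            have "(\<rho> $$ (i,i) + c * \<rho> $$ (i,j) + cnj c * \<rho> $$ (j,i) + \<rho> $$ (j,j)) / 2
                = (\<sigma> $$ (i,i) + c * \<sigma> $$ (i,j) + cnj c * \<sigma> $$ (j,i) + \<sigma> $$ (j,j)) / 2"
              using all[OF c] qf_rot[OF ijne ij(1,2) c, of \<rho>] qf_rot[OF ijne ij(1,2) c, of \<sigma>] by simp
            then have "Re (c * \<rho> $$ (i,j) + cnj (c * \<rho> $$ (i,j))) = Re (c * \<sigma> $$ (i,j) + cnj (c * \<sigma> $$ (i,j)))"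
              using diag[OF ij(1)] diag[OF ij(2)] h\<rho> h\<sigma> by (simp add: complex_eq_iff)
            then show ?thesis by simp
          qed
          have "Re (\<rho> $$ (i,j)) = Re (\<sigma> $$ (i,j))" using R[of 1] by simp
          moreover have "Im (\<rho> $$ (i,j)) = Im (\<sigma> $$ (i,j))" using R[of "\<i>"] by simp
          ultimately show False using ij(3) complex_eqI by blast
        qed
        then obtain c where c: "c * cnj c = 1" "qf d \<rho> (rot c i j i) \<noteq> qf d \<sigma> (rot c i j i)" by blast
        show ?thesis by (rule pos_case[OF assms(1,2) frame_rot[OF ijne ij(1,2) c(1)] assms(3,4) ij(1) c(2)])
      qed
      then show False using z by simp
    qed
  qed
  show ?thesis using nonneg iff by blast
qed

end
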